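(* Let $G$ be a finite simple group and $c:X\twoheadrightarrow G$ a surjective generalized subgroup of $G$. Then every non-trivial homomorphism $f:X\to G$ can be written as $f=hc$ for some automorphism $h:G\to G$.
   Context: A homomorphism $c:X\to G$ is a generalized subgroup of $G$ if the map $\mathrm{Hom}(X,X)\to\mathrm{Hom}(X,G)$, $g\mapsto cg$, is injective. *)

theory Defs
  imports "HOL-Algebra.Algebra"
begin

text \<open>Homomorphisms are identified
  when they agree on the carrier of X (HOL functions are total).\<close>
definition generalized_subgroup :: "('a, 'c) monoid_scheme \<Rightarrow> ('b, 'd) monoid_scheme \<Rightarrow> ('a \<Rightarrow> 'b) \<Rightarrow> bool"
  where "generalized_subgroup A H c \<longleftrightarrow> c \<in> hom A H \<and>
    (\<forall>g1\<in>hom A A. \<forall>g2\<in>hom A A.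
       (\<forall>x\<in>carrier A. c (g1 x) = c (g2 x)) \<longrightarrow> (\<forall>x\<in>carrier A. g1 x = g2 x))"

end

theory Submission
  imports Defs
begin

locale ctx = K: group K + G: group G for K (structure) and G (structure) +
  fixes c assumes ch: "c \<in> hom K G" and gs: "generalized_subgroup K G c"
    and cs: "c ` carrier K = carrier G" and fin: "finite (carrier G)"
begin

lemma c_mult: "x \<in> carrier K \<Longrightarrow> y \<in> carrier K \<Longrightarrow> c (x \<otimes> y) = c x \<otimes>\<^bsub>G\<^esub> c y"
  using ch by (simp add: hom_mult)
lemma c_car: "x \<in> carrier K \<Longrightarrow> c x \<in> carrier G"
  using ch by (simp add: hom_in_carrier)
lemma c_one: "c \<one> = \<one>\<^bsub>G\<^esub>"
  using ch hom_one K.group_axioms G.group_axioms by blast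
lemma c_inv: "x \<in> carrier K \<Longrightarrow> c (inv x) = inv\<^bsub>G\<^esub> c x"
proof -
  interpret group_hom K G c using ch by unfold_locales
  show "x \<in> carrier K \<Longrightarrow> c (inv x) = inv\<^bsub>G\<^esub> c x" by simp
qed

lemma triv:
  assumes "phi \<in> hom K K" "\<And>x. x \<in> carrier K \<Longrightarrow> c (phi x) = \<one>\<^bsub>G\<^esub>" "x \<in> carrier K"
  shows "phi x = \<one>"
proof -
  have t: "(\<lambda>x. \<one>) \<in> hom K K" by (rule homI) auto
  have "\<forall>g1\<in>hom K K. \<forall>g2\<in>hom K K. (\<forall>x\<in>carrier K. c (g1 x) = c (g2 x)) \<longrightarrow> (\<forall>x\<in>carrier K. g1 x = g2 x)"
    using gs unfolding generalized_subgroup_def by blast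
  from this[rule_format, OF assms(1) t] show ?thesis using assms(2,3) c_one by auto
qed

lemma central:
  assumes z: "z \<in> carrier K" "c z = \<one>\<^bsub>G\<^esub>" and x: "x \<in> carrier K"
  shows "z \<otimes> x = x \<otimes> z"
proof -
  have h: "(\<lambda>x. z \<otimes> x \<otimes> inv z) \<in> hom K K"
  proof (rule homI)
    fix x y assume "x \<in> carrier K" "y \<in> carrier K"
    then show "z \<otimes> (x \<otimes> y) \<otimes> inv z = z \<otimes> x \<otimes> inv z \<otimes> (z \<otimes> y \<otimes> inv z)"
    proof -
      have e: "inv z \<otimes> (z \<otimes> (y \<otimes> inv z)) = y \<otimes> inv z"
        using z \<open>y \<in> carrier K\<close> by (simp add: K.m_assoc[symmetric])
      have "z \<otimes> x \<otimes> inv z \<otimes> (z \<otimes> y \<otimes> inv z) = z \<otimes> (x \<otimes> (inv z \<otimes> (z \<otimes> (y \<otimes> inv z))))"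
        using z \<open>x \<in> carrier K\<close> \<open>y \<in> carrier K\<close> by (simp only: K.m_assoc K.m_closed K.inv_closed)
      also have "\<dots> = z \<otimes> (x \<otimes> y) \<otimes> inv z"
        unfolding e using z \<open>x \<in> carrier K\<close> \<open>y \<in> carrier K\<close> by (simp only: K.m_assoc K.m_closed K.inv_closed)
      finally show ?thesis by (rule sym)
    qed
  qed (use z in auto)
  have i: "(\<lambda>x. x) \<in> hom K K" by (rule homI) auto
  have "\<forall>x\<in>carrier K. c (z \<otimes> x \<otimes> inv z) = c x"
  proof
    fix y assume y: "y \<in> carrier K"
    have "c (z \<otimes> y \<otimes> inv z) = c z \<otimes>\<^bsub>G\<^esub> c y \<otimes>\<^bsub>G\<^esub> inv\<^bsub>G\<^esub> c z"
      using z y by (simp add: c_mult c_inv)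
    also have "\<dots> = c y" using z(2) c_car[OF y] by (simp only: G.l_one G.inv_one G.r_one)
    finally show "c (z \<otimes> y \<otimes> inv z) = c y" .
  qed
  moreover have gsall: "\<forall>g1\<in>hom K K. \<forall>g2\<in>hom K K. (\<forall>x\<in>carrier K. c (g1 x) = c (g2 x)) \<longrightarrow> (\<forall>x\<in>carrier K. g1 x = g2 x)"
    using gs unfolding generalized_subgroup_def by blast
  ultimately have "\<forall>x\<in>carrier K. (\<lambda>x. z \<otimes> x \<otimes> inv z) x = (\<lambda>x. x) x"
    using gsall[THEN bspec, OF h, THEN bspec, OF i, THEN mp] by simp
  then have "z \<otimes> x \<otimes> inv z = x" using x by simp
  then have "z \<otimes> x \<otimes> inv z \<otimes> z = x \<otimes> z" by simp
  then show ?thesis using z x by (simp add: K.m_assoc)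
qed

definition "N = {x \<in> carrier K. c x = \<one>\<^bsub>G\<^esub>}"
definition "rep g = (SOME t. t \<in> carrier K \<and> c t = g)"
definition "nn x g = inv (rep (c x \<otimes>\<^bsub>G\<^esub> g)) \<otimes> x \<otimes> rep g"
definition "V x = finprod (K\<lparr>carrier := N\<rparr>) (nn x) (carrier G)"

lemma rep: "g \<in> carrier G \<Longrightarrow> rep g \<in> carrier K \<and> c (rep g) = g"
proof -
  assume "g \<in> carrier G"
  then have "g \<in> c ` carrier K" using cs by simp
  then obtain t where "t \<in> carrier K" "c t = g" by (auto simp only: image_iff)
  then have "t \<in> carrier K \<and> c t = g" by simp
  then show ?thesis unfolding rep_def by (rule someI)
qed

lemma N_sub: "subgroup N K"
proof -
  interpret group_hom K G c using ch by unfold_locales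
  show ?thesis using subgroup_kernel unfolding kernel_def N_def .
qed

lemma NS: "comm_group (K\<lparr>carrier := N\<rparr>)"
proof -
  interpret g: group "K\<lparr>carrier := N\<rparr>" using N_sub by (rule subgroup.subgroup_is_group) (rule K.group_axioms)
  show ?thesis
  proof (rule g.group_comm_groupI)
    fix x y assume "x \<in> carrier (K\<lparr>carrier := N\<rparr>)" "y \<in> carrier (K\<lparr>carrier := N\<rparr>)"
    then have "x \<in> carrier K" "c x = \<one>\<^bsub>G\<^esub>" "y \<in> carrier K" unfolding N_def by auto
    then have "x \<otimes> y = y \<otimes> x" by (rule central)
    then show "x \<otimes>\<^bsub>K\<lparr>carrier := N\<rparr>\<^esub> y = y \<otimes>\<^bsub>K\<lparr>carrier := N\<rparr>\<^esub> x" by simp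
  qed
qed

lemma nn_N: "x \<in> carrier K \<Longrightarrow> g \<in> carrier G \<Longrightarrow> nn x g \<in> N"
proof -
  assume x: "x \<in> carrier K" and g: "g \<in> carrier G"
  have cx: "c x \<in> carrier G" using c_car x .
  have r1: "rep (c x \<otimes>\<^bsub>G\<^esub> g) \<in> carrier K" "c (rep (c x \<otimes>\<^bsub>G\<^esub> g)) = c x \<otimes>\<^bsub>G\<^esub> g"
    using rep[of "c x \<otimes>\<^bsub>G\<^esub> g"] cx g by auto
  have r2: "rep g \<in> carrier K" "c (rep g) = g" using rep g by auto
  have "c (nn x g) = inv\<^bsub>G\<^esub> (c x \<otimes>\<^bsub>G\<^esub> g) \<otimes>\<^bsub>G\<^esub> c x \<otimes>\<^bsub>G\<^esub> g"
    unfolding nn_def using r1 r2 x by (simp add: c_mult c_inv)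
  also have "\<dots> = \<one>\<^bsub>G\<^esub>" using cx g by (simp add: G.m_assoc G.inv_mult_group)
  finally show ?thesis unfolding N_def nn_def using r1 r2 x by auto
qed

lemma nn_mult:
  assumes x: "x \<in> carrier K" and y: "y \<in> carrier K" and g: "g \<in> carrier G"
  shows "nn (x \<otimes> y) g = nn x (c y \<otimes>\<^bsub>G\<^esub> g) \<otimes> nn y g"
proof -
  have cx: "c x \<in> carrier G" "c y \<in> carrier G" using c_car x y by auto
  define r where "r = rep (c x \<otimes>\<^bsub>G\<^esub> (c y \<otimes>\<^bsub>G\<^esub> g))"
  define s where "s = rep (c y \<otimes>\<^bsub>G\<^esub> g)"
  have rK: "r \<in> carrier K" "s \<in> carrier K" "rep g \<in> carrier K"
    unfolding r_def s_def using rep cx g by auto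
  have "nn (x \<otimes> y) g = inv r \<otimes> (x \<otimes> y) \<otimes> rep g"
    unfolding nn_def r_def using x y cx g by (simp add: c_mult G.m_assoc)
  also have "\<dots> = inv r \<otimes> x \<otimes> (s \<otimes> inv s) \<otimes> y \<otimes> rep g"
    using rK x y by (simp add: K.m_assoc)
  also have "\<dots> = (inv r \<otimes> x \<otimes> s) \<otimes> (inv s \<otimes> y \<otimes> rep g)"
    using rK x y by (simp only: K.m_assoc K.m_closed K.inv_closed)
  also have "\<dots> = nn x (c y \<otimes>\<^bsub>G\<^esub> g) \<otimes> nn y g"
    unfolding nn_def r_def s_def by simp
  finally show ?thesis .
qed


lemma V_hom: "V \<in> hom K K" and V_N: "x \<in> carrier K \<Longrightarrow> V x \<in> N"
proof -
  interpret NSg: comm_group "K\<lparr>carrier := N\<rparr>" by (rule NS)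
  have Nc: "N \<subseteq> carrier K" unfolding N_def by auto
  have Pi: "\<And>x. x \<in> carrier K \<Longrightarrow> nn x \<in> carrier G \<rightarrow> carrier (K\<lparr>carrier := N\<rparr>)"
    using nn_N by auto
  show VN: "\<And>x. x \<in> carrier K \<Longrightarrow> V x \<in> N"
    unfolding V_def using NSg.finprod_closed[OF Pi] by simp
  show "V \<in> hom K K"
  proof (rule homI)
    fix x assume "x \<in> carrier K" then show "V x \<in> carrier K" using VN Nc by blast
  next
    fix x y assume x: "x \<in> carrier K" and y: "y \<in> carrier K"
    have cy: "c y \<in> carrier G" using c_car y .
    have bij: "(\<lambda>g. c y \<otimes>\<^bsub>G\<^esub> g) ` carrier G = carrier G"
    proof
      show "(\<lambda>g. c y \<otimes>\<^bsub>G\<^esub> g) ` carrier G \<subseteq> carrier G" using cy by auto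
      show "carrier G \<subseteq> (\<lambda>g. c y \<otimes>\<^bsub>G\<^esub> g) ` carrier G"
      proof
        fix g assume g: "g \<in> carrier G"
        have "g = c y \<otimes>\<^bsub>G\<^esub> (inv\<^bsub>G\<^esub> c y \<otimes>\<^bsub>G\<^esub> g)"
          using g cy by (simp add: G.m_assoc[symmetric])
        then show "g \<in> (\<lambda>g. c y \<otimes>\<^bsub>G\<^esub> g) ` carrier G" using g cy by blast
      qed
    qed
    have inj: "inj_on (\<lambda>g. c y \<otimes>\<^bsub>G\<^esub> g) (carrier G)"
      using cy by (auto simp: inj_on_def)
    have "V (x \<otimes> y) = finprod (K\<lparr>carrier := N\<rparr>) (\<lambda>g. nn x (c y \<otimes>\<^bsub>G\<^esub> g) \<otimes>\<^bsub>K\<lparr>carrier := N\<rparr>\<^esub> nn y g) (carrier G)"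
      unfolding V_def
    proof (rule NSg.finprod_cong')
      show "(\<lambda>g. nn x (c y \<otimes>\<^bsub>G\<^esub> g) \<otimes>\<^bsub>K\<lparr>carrier := N\<rparr>\<^esub> nn y g) \<in> carrier G \<rightarrow> carrier (K\<lparr>carrier := N\<rparr>)"
      proof
        fix g assume g: "g \<in> carrier G"
        then show "nn x (c y \<otimes>\<^bsub>G\<^esub> g) \<otimes>\<^bsub>K\<lparr>carrier := N\<rparr>\<^esub> nn y g \<in> carrier (K\<lparr>carrier := N\<rparr>)"
          using nn_N x y cy subgroup.m_closed[OF N_sub] by simp
      qed
    qed (use nn_mult[OF x y] in simp_all)
    also have "\<dots> = finprod (K\<lparr>carrier := N\<rparr>) (\<lambda>g. nn x (c y \<otimes>\<^bsub>G\<^esub> g)) (carrier G) \<otimes>\<^bsub>K\<lparr>carrier := N\<rparr>\<^esub> V y"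
      unfolding V_def
      by (rule NSg.finprod_multf) (use nn_N x y cy in auto)
    also have "finprod (K\<lparr>carrier := N\<rparr>) (\<lambda>g. nn x (c y \<otimes>\<^bsub>G\<^esub> g)) (carrier G) = V x"
      unfolding V_def
      using NSg.finprod_reindex[of "nn x" "\<lambda>g. c y \<otimes>\<^bsub>G\<^esub> g" "carrier G"] bij inj Pi[OF x] by simp
    finally show "V (x \<otimes> y) = V x \<otimes> V y" by simp
  qed
qed

lemma V_triv: "x \<in> carrier K \<Longrightarrow> V x = \<one>"
  by (rule triv[OF V_hom]) (use V_N N_def in auto)

lemma V_pow: "z \<in> N \<Longrightarrow> V z = z [^] card (carrier G)"
proof -
  assume z: "z \<in> N"
  interpret NSg: comm_group "K\<lparr>carrier := N\<rparr>" by (rule NS)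
  have zK: "z \<in> carrier K" "c z = \<one>\<^bsub>G\<^esub>" using z unfolding N_def by auto
  have "\<And>g. g \<in> carrier G \<Longrightarrow> nn z g = z"
  proof -
    fix g assume g: "g \<in> carrier G"
    have r: "rep g \<in> carrier K" using rep g by auto
    have "nn z g = inv (rep g) \<otimes> z \<otimes> rep g" unfolding nn_def using zK g by simp
    also have "\<dots> = inv (rep g) \<otimes> (rep g \<otimes> z)" using central[OF zK r] r zK by (simp add: K.m_assoc)
    also have "\<dots> = z" using r zK by (simp add: K.m_assoc[symmetric])
    finally show "nn z g = z" .
  qed
  then have "V z = finprod (K\<lparr>carrier := N\<rparr>) (\<lambda>g. z) (carrier G)"
    unfolding V_def by (intro NSg.finprod_cong') (use z in auto)
  also have "\<dots> = z [^]\<^bsub>K\<lparr>carrier := N\<rparr>\<^esub> card (carrier G)"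
    by (rule NSg.finprod_const) (use z in simp)
  also have "\<dots> = z [^] card (carrier G)" by (simp add: nat_pow_def)
  finally show ?thesis .
qed

lemma N_exp: "z \<in> N \<Longrightarrow> z [^] card (carrier G) = \<one>"
  using V_pow V_triv N_def by auto

end

lemma (in group) sub_pow_closed:
  assumes "subgroup H G" "x \<in> H" shows "x [^] (n::nat) \<in> H"
proof (induction n)
  case 0 then show ?case using subgroup.one_closed[OF assms(1)] by simp
next
  case (Suc n) then show ?case using subgroup.m_closed[OF assms(1)] assms(2) by simp
qed

lemma (in monoid) pow_divmod:
  assumes "w \<in> carrier G"
  shows "w [^] (k::nat) = (w [^] (q::nat)) [^] (k div q) \<otimes> w [^] (k mod q)"
proof -
  have "w [^] k = w [^] (q * (k div q) + k mod q)" by simp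
  also have "\<dots> = w [^] (q * (k div q)) \<otimes> w [^] (k mod q)"
    using assms(1) by (simp only: nat_pow_mult)
  also have "\<dots> = (w [^] q) [^] (k div q) \<otimes> w [^] (k mod q)"
    using assms(1) by (simp only: nat_pow_pow)
  finally show ?thesis .
qed

lemma (in monoid) pow_mod:
  assumes "w \<in> carrier G" "w [^] (q::nat) = \<one>"
  shows "w [^] (k::nat) = w [^] (k mod q)"
proof -
  have "w [^] k = w [^] (q * (k div q) + k mod q)" by simp
  also have "\<dots> = w [^] (q * (k div q)) \<otimes> w [^] (k mod q)"
    using assms(1) by (simp only: nat_pow_mult)
  also have "\<dots> = (w [^] q) [^] (k div q) \<otimes> w [^] (k mod q)"
    using assms(1) by (simp only: nat_pow_pow)
  also have "\<dots> = w [^] (k mod q)" using assms by simp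
  finally show ?thesis .
qed

locale ctx2 = ctx + S: simple_group G +
  fixes f assumes fh: "f \<in> hom K G" and fnt: "\<exists>x\<in>carrier K. f x \<noteq> \<one>\<^bsub>G\<^esub>"
begin

lemma f_mult: "x \<in> carrier K \<Longrightarrow> y \<in> carrier K \<Longrightarrow> f (x \<otimes> y) = f x \<otimes>\<^bsub>G\<^esub> f y"
  using fh by (simp add: hom_mult)
lemma f_car: "x \<in> carrier K \<Longrightarrow> f x \<in> carrier G"
  using fh by (simp add: hom_in_carrier)
lemma f_one: "f \<one> = \<one>\<^bsub>G\<^esub>"
  using fh hom_one K.group_axioms G.group_axioms by blast
lemma f_inv: "x \<in> carrier K \<Longrightarrow> f (inv x) = inv\<^bsub>G\<^esub> f x"
proof -
  interpret group_hom K G f using fh by unfold_locales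
  show "x \<in> carrier K \<Longrightarrow> f (inv x) = inv\<^bsub>G\<^esub> f x" by simp
qed
lemma f_pow: "x \<in> carrier K \<Longrightarrow> f (x [^] (n::nat)) = f x [^]\<^bsub>G\<^esub> n"
proof -
  interpret group_hom K G f using fh by unfold_locales
  show "x \<in> carrier K \<Longrightarrow> f (x [^] (n::nat)) = f x [^]\<^bsub>G\<^esub> n" by (rule hom_nat_pow)
qed
lemma c_pow: "x \<in> carrier K \<Longrightarrow> c (x [^] (n::nat)) = c x [^]\<^bsub>G\<^esub> n"
proof -
  interpret group_hom K G c using ch by unfold_locales
  show "x \<in> carrier K \<Longrightarrow> c (x [^] (n::nat)) = c x [^]\<^bsub>G\<^esub> n" by (rule hom_nat_pow)
qed


lemma abel_contra:
  assumes cov: "\<forall>x\<in>carrier K. \<exists>z\<in>N. f z = f x" and z0: "z0 \<in> N" "f z0 \<noteq> \<one>\<^bsub>G\<^esub>"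
  shows False
proof -
  define A where "A = f ` carrier K"
  have NK: "\<And>z. z \<in> N \<Longrightarrow> z \<in> carrier K" "\<And>z. z \<in> N \<Longrightarrow> c z = \<one>\<^bsub>G\<^esub>" by (auto simp: N_def)
  have AG: "A \<subseteq> carrier G" using f_car A_def by auto
  have Asub: "subgroup A G"
  proof -
    interpret group_hom K G f using fh by unfold_locales
    show ?thesis unfolding A_def by (rule img_is_subgroup)
  qed
  have comm: "\<And>a a'. a \<in> A \<Longrightarrow> a' \<in> A \<Longrightarrow> a \<otimes>\<^bsub>G\<^esub> a' = a' \<otimes>\<^bsub>G\<^esub> a"
  proof -
    fix a a' assume "a \<in> A" "a' \<in> A"
    then obtain x x' where x: "x \<in> carrier K" "a = f x" "x' \<in> carrier K" "a' = f x'" unfolding A_def by auto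
    obtain z where z: "z \<in> N" "f z = f x" using cov x by blast
    obtain z' where z': "z' \<in> N" "f z' = f x'" using cov x by blast
    have "z \<otimes> z' = z' \<otimes> z" using central[OF NK(1)[OF z(1)] NK(2)[OF z(1)] NK(1)[OF z'(1)]] .
    then have "f (z \<otimes> z') = f (z' \<otimes> z)" by simp
    then show "a \<otimes>\<^bsub>G\<^esub> a' = a' \<otimes>\<^bsub>G\<^esub> a" using f_mult NK z z' x by metis
  qed
  have z0A: "f z0 \<in> A" using z0 NK A_def by auto
  define C where "C = {H. subgroup H G \<and> H \<subseteq> A \<and> H \<noteq> A}"
  have oneC: "{\<one>\<^bsub>G\<^esub>} \<in> C"
    unfolding C_def using G.triv_subgroup subgroup.one_closed[OF Asub] z0A z0(2) by auto
  have finC: "finite C"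
  proof (rule finite_subset)
    show "C \<subseteq> Pow (carrier G)" unfolding C_def using subgroup.subset by auto
    show "finite (Pow (carrier G))" using fin by simp
  qed
  define m where "m = Max (card ` C)"
  have "m \<in> card ` C" unfolding m_def using finC oneC by (intro Max_in) auto
  then obtain H where HC: "H \<in> C" and Hm: "card H = m" by auto
  have Hmax: "\<And>H'. H' \<in> C \<Longrightarrow> card H' \<le> card H"
    unfolding Hm m_def using finC by (intro Max_ge) auto
  have Hsub: "subgroup H G" and HA: "H \<subseteq> A" and HneA: "H \<noteq> A" using HC unfolding C_def by auto
  obtain b where bA: "b \<in> A" and bH: "b \<notin> H" using HA HneA by blast
  have bG: "b \<in> carrier G" using bA AG by auto
  obtain y where yN: "y \<in> N" and fy: "f y = b"
    using bA cov unfolding A_def by auto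
  have yK: "y \<in> carrier K" using NK yN by auto
  have powA: "\<And>k::nat. b [^]\<^bsub>G\<^esub> k \<in> A"
    using f_pow[OF yK] yK fy unfolding A_def by (metis K.nat_pow_closed image_eqI)
  have hA: "\<And>h. h \<in> H \<Longrightarrow> h \<in> A" using HA by auto
  have hG: "\<And>h. h \<in> H \<Longrightarrow> h \<in> carrier G" using hA AG by auto
  have prodform: "\<And>(k::nat) (j::nat) h h'. h \<in> H \<Longrightarrow> h' \<in> H \<Longrightarrow>
     (b [^]\<^bsub>G\<^esub> k \<otimes>\<^bsub>G\<^esub> h) \<otimes>\<^bsub>G\<^esub> (b [^]\<^bsub>G\<^esub> j \<otimes>\<^bsub>G\<^esub> h') = b [^]\<^bsub>G\<^esub> (k + j) \<otimes>\<^bsub>G\<^esub> (h \<otimes>\<^bsub>G\<^esub> h')"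
  proof -
    fix k j :: nat and h h' assume h: "h \<in> H" "h' \<in> H"
    have c1: "h \<otimes>\<^bsub>G\<^esub> b [^]\<^bsub>G\<^esub> j = b [^]\<^bsub>G\<^esub> j \<otimes>\<^bsub>G\<^esub> h" using comm hA h powA by blast
    have bk: "b [^]\<^bsub>G\<^esub> k \<in> carrier G" "b [^]\<^bsub>G\<^esub> j \<in> carrier G" using bG by auto
    have "(b [^]\<^bsub>G\<^esub> k \<otimes>\<^bsub>G\<^esub> h) \<otimes>\<^bsub>G\<^esub> (b [^]\<^bsub>G\<^esub> j \<otimes>\<^bsub>G\<^esub> h') = b [^]\<^bsub>G\<^esub> k \<otimes>\<^bsub>G\<^esub> ((h \<otimes>\<^bsub>G\<^esub> b [^]\<^bsub>G\<^esub> j) \<otimes>\<^bsub>G\<^esub> h')"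
      using bk hG h by (simp only: G.m_assoc G.m_closed)
    also have "\<dots> = b [^]\<^bsub>G\<^esub> k \<otimes>\<^bsub>G\<^esub> ((b [^]\<^bsub>G\<^esub> j \<otimes>\<^bsub>G\<^esub> h) \<otimes>\<^bsub>G\<^esub> h')" by (simp only: c1)
    also have "\<dots> = (b [^]\<^bsub>G\<^esub> k \<otimes>\<^bsub>G\<^esub> b [^]\<^bsub>G\<^esub> j) \<otimes>\<^bsub>G\<^esub> (h \<otimes>\<^bsub>G\<^esub> h')"
      using bk hG h by (simp only: G.m_assoc G.m_closed)
    also have "\<dots> = b [^]\<^bsub>G\<^esub> (k + j) \<otimes>\<^bsub>G\<^esub> (h \<otimes>\<^bsub>G\<^esub> h')" using bG by (simp only: G.nat_pow_mult)
    finally show "(b [^]\<^bsub>G\<^esub> k \<otimes>\<^bsub>G\<^esub> h) \<otimes>\<^bsub>G\<^esub> (b [^]\<^bsub>G\<^esub> j \<otimes>\<^bsub>G\<^esub> h') = b [^]\<^bsub>G\<^esub> (k + j) \<otimes>\<^bsub>G\<^esub> (h \<otimes>\<^bsub>G\<^esub> h')" .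
  qed
  define S where "S = {a. \<exists>k::nat. \<exists>h. h \<in> H \<and> a = b [^]\<^bsub>G\<^esub> k \<otimes>\<^bsub>G\<^esub> h}"
  have SA: "S \<subseteq> A" unfolding S_def using powA hA subgroup.m_closed[OF Asub] by blast
  have ordG: "order G > 1" by (rule S.order_gt_one)
  have bo: "b [^]\<^bsub>G\<^esub> order G = \<one>\<^bsub>G\<^esub>" using G.pow_order_eq_1 bG by blast
  have Ssub: "subgroup S G"
  proof (rule G.subgroupI)
    show "S \<subseteq> carrier G" using SA AG by auto
    have "\<one>\<^bsub>G\<^esub> = b [^]\<^bsub>G\<^esub> (0::nat) \<otimes>\<^bsub>G\<^esub> \<one>\<^bsub>G\<^esub>" by simp
    then show "S \<noteq> {}" unfolding S_def using subgroup.one_closed[OF Hsub] by blast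
  next
    fix a assume "a \<in> S"
    then obtain k h where h: "h \<in> H" and a: "a = b [^]\<^bsub>G\<^esub> (k::nat) \<otimes>\<^bsub>G\<^esub> h" unfolding S_def by auto
    have ih: "inv\<^bsub>G\<^esub> h \<in> H" using subgroup.m_inv_closed[OF Hsub h] .
    have e1: "(b [^]\<^bsub>G\<^esub> (k * (order G - 1)) \<otimes>\<^bsub>G\<^esub> inv\<^bsub>G\<^esub> h) \<otimes>\<^bsub>G\<^esub> (b [^]\<^bsub>G\<^esub> k \<otimes>\<^bsub>G\<^esub> h)
       = b [^]\<^bsub>G\<^esub> (k * (order G - 1) + k) \<otimes>\<^bsub>G\<^esub> (inv\<^bsub>G\<^esub> h \<otimes>\<^bsub>G\<^esub> h)"
      by (rule prodform[OF ih h])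
    have e2: "k * (order G - 1) + k = order G * k" using ordG by (simp add: algebra_simps)
    have e3: "b [^]\<^bsub>G\<^esub> (order G * k) = \<one>\<^bsub>G\<^esub>" using bo bG by (simp add: G.nat_pow_pow[symmetric])
    have e4: "inv\<^bsub>G\<^esub> h \<otimes>\<^bsub>G\<^esub> h = \<one>\<^bsub>G\<^esub>" using hG h by simp
    have "(b [^]\<^bsub>G\<^esub> (k * (order G - 1)) \<otimes>\<^bsub>G\<^esub> inv\<^bsub>G\<^esub> h) \<otimes>\<^bsub>G\<^esub> a = \<one>\<^bsub>G\<^esub>"
      unfolding a e1 e2 e3 e4 by simp
    then have "inv\<^bsub>G\<^esub> a = b [^]\<^bsub>G\<^esub> (k * (order G - 1)) \<otimes>\<^bsub>G\<^esub> inv\<^bsub>G\<^esub> h"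
      by (rule G.inv_equality) (use a h hG ih bG in auto)
    then show "inv\<^bsub>G\<^esub> a \<in> S" unfolding S_def using ih by blast
  next
    fix a a' assume "a \<in> S" "a' \<in> S"
    then obtain k h k' h' where h: "h \<in> H" "h' \<in> H" and a: "a = b [^]\<^bsub>G\<^esub> (k::nat) \<otimes>\<^bsub>G\<^esub> h"
      "a' = b [^]\<^bsub>G\<^esub> (k'::nat) \<otimes>\<^bsub>G\<^esub> h'" unfolding S_def by auto
    have "a \<otimes>\<^bsub>G\<^esub> a' = b [^]\<^bsub>G\<^esub> (k + k') \<otimes>\<^bsub>G\<^esub> (h \<otimes>\<^bsub>G\<^esub> h')" unfolding a by (rule prodform[OF h])
    then show "a \<otimes>\<^bsub>G\<^esub> a' \<in> S" unfolding S_def using subgroup.m_closed[OF Hsub h] by blast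
  qed
  have HS: "H \<subseteq> S"
  proof
    fix h assume "h \<in> H"
    then have "h = b [^]\<^bsub>G\<^esub> (0::nat) \<otimes>\<^bsub>G\<^esub> h" using hG by simp
    then show "h \<in> S" unfolding S_def using \<open>h \<in> H\<close> by blast
  qed
  have bS: "b \<in> S"
  proof -
    have "b = b [^]\<^bsub>G\<^esub> (1::nat) \<otimes>\<^bsub>G\<^esub> \<one>\<^bsub>G\<^esub>" using bG by simp
    then show ?thesis unfolding S_def using subgroup.one_closed[OF Hsub] by blast
  qed
  have SeqA: "S = A"
  proof (rule ccontr)
    assume "S \<noteq> A"
    then have "S \<in> C" unfolding C_def using Ssub SA by blast
    then have "card S \<le> card H" by (rule Hmax)
    moreover have "card H < card S"
    proof (rule psubset_card_mono)
      show "finite S" using SA AG fin by (meson finite_subset)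
      show "H \<subset> S" using HS bS bH by blast
    qed
    ultimately show False by simp
  qed
  have bpos: "0 < order G \<and> b [^]\<^bsub>G\<^esub> order G \<in> H" using ordG bo subgroup.one_closed[OF Hsub] by simp
  define q where "q = (LEAST k::nat. 0 < k \<and> b [^]\<^bsub>G\<^esub> k \<in> H)"
  have q1: "0 < q \<and> b [^]\<^bsub>G\<^esub> q \<in> H" unfolding q_def by (rule LeastI[of _ "order G"]) (rule bpos)
  have qmin: "\<And>k::nat. 0 < k \<Longrightarrow> k < q \<Longrightarrow> b [^]\<^bsub>G\<^esub> k \<notin> H"
    unfolding q_def using not_less_Least by blast
  have q2: "q \<noteq> 1" using q1 bH bG by auto
  have dvdH: "\<And>k::nat. b [^]\<^bsub>G\<^esub> k \<in> H \<Longrightarrow> q dvd k"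
  proof -
    fix k :: nat assume k: "b [^]\<^bsub>G\<^esub> k \<in> H"
    have e: "b [^]\<^bsub>G\<^esub> k = (b [^]\<^bsub>G\<^esub> q) [^]\<^bsub>G\<^esub> (k div q) \<otimes>\<^bsub>G\<^esub> b [^]\<^bsub>G\<^esub> (k mod q)"
      using G.pow_divmod bG by blast
    have pH: "(b [^]\<^bsub>G\<^esub> q) [^]\<^bsub>G\<^esub> (k div q) \<in> H"
      using q1 Hsub G.sub_pow_closed by blast
    have "b [^]\<^bsub>G\<^esub> (k mod q) = inv\<^bsub>G\<^esub> ((b [^]\<^bsub>G\<^esub> q) [^]\<^bsub>G\<^esub> (k div q)) \<otimes>\<^bsub>G\<^esub> b [^]\<^bsub>G\<^esub> k"
      unfolding e using bG by (simp add: G.m_assoc[symmetric])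
    then have "b [^]\<^bsub>G\<^esub> (k mod q) \<in> H"
      using subgroup.m_closed[OF Hsub subgroup.m_inv_closed[OF Hsub pH] k] by simp
    then have "k mod q = 0" using qmin[of "k mod q"] q1 by (meson mod_less_divisor neq0_conv)
    then show "q dvd k" by auto
  qed
  have congr_le: "\<And>(k::nat) (j::nat) h h'. j \<le> k \<Longrightarrow> h \<in> H \<Longrightarrow> h' \<in> H \<Longrightarrow>
      b [^]\<^bsub>G\<^esub> k \<otimes>\<^bsub>G\<^esub> h = b [^]\<^bsub>G\<^esub> j \<otimes>\<^bsub>G\<^esub> h' \<Longrightarrow> k mod q = j mod q"
  proof -
    fix k j :: nat and h h' assume jk: "j \<le> k" and h: "h \<in> H" "h' \<in> H"
      and eq: "b [^]\<^bsub>G\<^esub> k \<otimes>\<^bsub>G\<^esub> h = b [^]\<^bsub>G\<^esub> j \<otimes>\<^bsub>G\<^esub> h'"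
    have bj: "b [^]\<^bsub>G\<^esub> j \<in> carrier G" "b [^]\<^bsub>G\<^esub> (k - j) \<in> carrier G" using bG by auto
    have "b [^]\<^bsub>G\<^esub> j \<otimes>\<^bsub>G\<^esub> b [^]\<^bsub>G\<^esub> (k - j) = b [^]\<^bsub>G\<^esub> k"
      using bG jk by (simp only: G.nat_pow_mult le_add_diff_inverse)
    then have "b [^]\<^bsub>G\<^esub> j \<otimes>\<^bsub>G\<^esub> (b [^]\<^bsub>G\<^esub> (k - j) \<otimes>\<^bsub>G\<^esub> h) = b [^]\<^bsub>G\<^esub> j \<otimes>\<^bsub>G\<^esub> h'"
      using eq bj hG h by (metis G.m_assoc)
    then have "b [^]\<^bsub>G\<^esub> (k - j) \<otimes>\<^bsub>G\<^esub> h = h'" using bj hG h G.Units_eq G.Units_l_cancel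
      by (metis G.m_closed)
    then have "b [^]\<^bsub>G\<^esub> (k - j) = h' \<otimes>\<^bsub>G\<^esub> inv\<^bsub>G\<^esub> h" using bj hG h by (metis G.inv_solve_right)
    then have "b [^]\<^bsub>G\<^esub> (k - j) \<in> H" using subgroup.m_closed[OF Hsub h(2) subgroup.m_inv_closed[OF Hsub h(1)]] by simp
    then have "q dvd k - j" by (rule dvdH)
    then show "k mod q = j mod q" using jk mod_eq_dvd_iff_nat by blast
  qed
  have congr: "\<And>(k::nat) (j::nat) h h'. h \<in> H \<Longrightarrow> h' \<in> H \<Longrightarrow>
      b [^]\<^bsub>G\<^esub> k \<otimes>\<^bsub>G\<^esub> h = b [^]\<^bsub>G\<^esub> j \<otimes>\<^bsub>G\<^esub> h' \<Longrightarrow> k mod q = j mod q"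
    by (metis congr_le nat_le_linear)
  have cardpos: "0 < card (carrier G)" using ordG unfolding order_def by simp
  have yd: "0 < card (carrier G) \<and> y [^] card (carrier G) = \<one>" using N_exp[OF yN] cardpos by simp
  define d where "d = (LEAST d::nat. 0 < d \<and> y [^] d = \<one>)"
  have d1: "0 < d \<and> y [^] d = \<one>" unfolding d_def by (rule LeastI[of _ "card (carrier G)"]) (rule yd)
  have dmin: "\<And>k::nat. 0 < k \<Longrightarrow> k < d \<Longrightarrow> y [^] k \<noteq> \<one>"
    unfolding d_def using not_less_Least by blast
  have "b [^]\<^bsub>G\<^esub> d = \<one>\<^bsub>G\<^esub>" using f_pow[OF yK, of d] d1 fy f_one by simp
  then have "q dvd d" using dvdH subgroup.one_closed[OF Hsub] by simp
  then obtain e where de: "d = q * e" by (auto simp: dvd_def)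
  have epos: "0 < e" using d1 de by simp
  have eless: "e < d" using de q1 q2 epos by simp
  define w where "w = y [^] e"
  have wK: "w \<in> carrier K" unfolding w_def using yK by simp
  have w1: "w \<noteq> \<one>" unfolding w_def using dmin epos eless by blast
  have wq: "w [^] q = \<one>" unfolding w_def using yK d1 de by (simp add: K.nat_pow_pow mult.commute)
  have cw: "\<And>k::nat. c (w [^] k) = \<one>\<^bsub>G\<^esub>"
    using c_pow wK w_def c_pow[OF yK] NK(2)[OF yN] yK by (simp add: K.nat_pow_pow)
  have decomp: "\<And>a. a \<in> A \<Longrightarrow> \<exists>k::nat. \<exists>h\<in>H. a = b [^]\<^bsub>G\<^esub> k \<otimes>\<^bsub>G\<^esub> h"
    using SeqA unfolding S_def by blast
  define chi where "chi a = (SOME k::nat. \<exists>h\<in>H. a = b [^]\<^bsub>G\<^esub> k \<otimes>\<^bsub>G\<^esub> h)" for a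
  have chi: "\<And>a. a \<in> A \<Longrightarrow> \<exists>h\<in>H. a = b [^]\<^bsub>G\<^esub> chi a \<otimes>\<^bsub>G\<^esub> h"
    unfolding chi_def using decomp by (rule someI_ex)
  have wmod: "\<And>k::nat. w [^] k = w [^] (k mod q)" using K.pow_mod[OF wK wq] by blast
  define phi where "phi x = w [^] chi (f x)" for x
  have fA: "\<And>x. x \<in> carrier K \<Longrightarrow> f x \<in> A" unfolding A_def by blast
  have phi_hom: "phi \<in> hom K K"
  proof (rule homI)
    fix x assume "x \<in> carrier K" then show "phi x \<in> carrier K" unfolding phi_def using wK by simp
  next
    fix x x' assume x: "x \<in> carrier K" "x' \<in> carrier K"
    obtain h1 where h1: "h1 \<in> H" "f x = b [^]\<^bsub>G\<^esub> chi (f x) \<otimes>\<^bsub>G\<^esub> h1" using chi fA x by blast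
    obtain h2 where h2: "h2 \<in> H" "f x' = b [^]\<^bsub>G\<^esub> chi (f x') \<otimes>\<^bsub>G\<^esub> h2" using chi fA x by blast
    obtain h3 where h3: "h3 \<in> H" "f (x \<otimes> x') = b [^]\<^bsub>G\<^esub> chi (f (x \<otimes> x')) \<otimes>\<^bsub>G\<^esub> h3"
      using chi fA x K.m_closed by blast
    have "f (x \<otimes> x') = b [^]\<^bsub>G\<^esub> (chi (f x) + chi (f x')) \<otimes>\<^bsub>G\<^esub> (h1 \<otimes>\<^bsub>G\<^esub> h2)"
      using f_mult[OF x] h1(2) h2(2) prodform[OF h1(1) h2(1)] by metis
    then have "chi (f (x \<otimes> x')) mod q = (chi (f x) + chi (f x')) mod q"
      using congr[OF h3(1) subgroup.m_closed[OF Hsub h1(1) h2(1)]] h3(2) by metis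
    then have "phi (x \<otimes> x') = w [^] (chi (f x) + chi (f x'))"
      unfolding phi_def by (metis wmod)
    then show "phi (x \<otimes> x') = phi x \<otimes> phi x'" unfolding phi_def using wK by (simp add: K.nat_pow_mult)
  qed
  have "phi y = \<one>" by (rule triv[OF phi_hom _ yK]) (simp add: phi_def cw)
  moreover have "chi b mod q = 1"
  proof -
    obtain h where h: "h \<in> H" "b = b [^]\<^bsub>G\<^esub> chi b \<otimes>\<^bsub>G\<^esub> h" using chi bA by blast
    have "b [^]\<^bsub>G\<^esub> chi b \<otimes>\<^bsub>G\<^esub> h = b [^]\<^bsub>G\<^esub> (1::nat) \<otimes>\<^bsub>G\<^esub> \<one>\<^bsub>G\<^esub>" using h bG by simp
    then have "chi b mod q = 1 mod q" using congr[OF h(1) subgroup.one_closed[OF Hsub]] by blast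
    then show ?thesis using q1 q2 by simp
  qed
  ultimately have "w [^] (1::nat) = \<one>" unfolding phi_def fy using wmod by metis
  then show False using w1 wK by simp
qed

lemma N_ker: "z \<in> N \<Longrightarrow> f z = \<one>\<^bsub>G\<^esub>"
proof (rule ccontr)
  assume z0: "z \<in> N" "f z \<noteq> \<one>\<^bsub>G\<^esub>"
  have NK: "\<And>z. z \<in> N \<Longrightarrow> z \<in> carrier K" "\<And>z. z \<in> N \<Longrightarrow> c z = \<one>\<^bsub>G\<^esub>" by (auto simp: N_def)
  define M where "M = kernel K G f"
  have MK: "\<And>m. m \<in> M \<Longrightarrow> m \<in> carrier K \<and> f m = \<one>\<^bsub>G\<^esub>" unfolding M_def kernel_def by auto
  have Msub: "subgroup M K"
  proof -
    interpret group_hom K G f using fh by unfold_locales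
    show ?thesis unfolding M_def by (rule subgroup_kernel)
  qed
  define P where "P = c ` M"
  have Psub: "subgroup P G"
  proof -
    interpret group_hom K G c using ch by unfold_locales
    show ?thesis unfolding P_def using Msub by (rule subgroup_img_is_subgroup)
  qed
  have Pn: "P \<lhd> G"
    unfolding G.normal_inv_iff
  proof (intro conjI Psub ballI)
    fix x p assume x: "x \<in> carrier G" and p: "p \<in> P"
    obtain k where k: "k \<in> carrier K" "x = c k" using x cs by auto
    obtain m where m: "m \<in> M" "p = c m" using p P_def by auto
    have mK: "m \<in> carrier K" "f m = \<one>\<^bsub>G\<^esub>" using MK m by auto
    have "f (k \<otimes> m \<otimes> inv k) = f k \<otimes>\<^bsub>G\<^esub> f m \<otimes>\<^bsub>G\<^esub> inv\<^bsub>G\<^esub> f k"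
      using k mK by (simp add: f_mult f_inv)
    also have "\<dots> = \<one>\<^bsub>G\<^esub>" using mK f_car k by simp
    finally have "k \<otimes> m \<otimes> inv k \<in> M" unfolding M_def kernel_def using k mK by simp
    moreover have "c (k \<otimes> m \<otimes> inv k) = x \<otimes>\<^bsub>G\<^esub> p \<otimes>\<^bsub>G\<^esub> inv\<^bsub>G\<^esub> x"
      using k mK m by (simp add: c_mult c_inv)
    ultimately show "x \<otimes>\<^bsub>G\<^esub> p \<otimes>\<^bsub>G\<^esub> inv\<^bsub>G\<^esub> x \<in> P" unfolding P_def by (metis image_eqI)
  qed
  then have "P = carrier G \<or> P = {\<one>\<^bsub>G\<^esub>}" by (rule S.no_real_normal_subgroup)
  then show False
  proof
    assume PG: "P = carrier G"
    have cov: "\<forall>x\<in>carrier K. \<exists>z\<in>N. f z = f x"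
    proof
      fix x assume x: "x \<in> carrier K"
      then have "c x \<in> P" using PG c_car by simp
      then obtain m where m: "m \<in> M" "c m = c x" unfolding P_def by auto
      have mK: "m \<in> carrier K" "f m = \<one>\<^bsub>G\<^esub>" using MK m by auto
      have "c (inv m \<otimes> x) = \<one>\<^bsub>G\<^esub>" using m mK x c_car by (simp add: c_mult c_inv)
      then have "inv m \<otimes> x \<in> N" unfolding N_def using mK x by simp
      moreover have "f (inv m \<otimes> x) = f x" using mK x f_car by (simp add: f_mult f_inv)
      ultimately show "\<exists>z\<in>N. f z = f x" by blast
    qed
    show False by (rule abel_contra[OF cov z0])
  next
    assume P1: "P = {\<one>\<^bsub>G\<^esub>}"
    have MN: "\<And>m. m \<in> M \<Longrightarrow> c m = \<one>\<^bsub>G\<^esub>" using P1 unfolding P_def by auto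
    have fib: "\<And>x x'. x \<in> carrier K \<Longrightarrow> x' \<in> carrier K \<Longrightarrow> f x = f x' \<Longrightarrow> c x = c x'"
    proof -
      fix x x' assume x: "x \<in> carrier K" "x' \<in> carrier K" "f x = f x'"
      have "f (inv x \<otimes> x') = \<one>\<^bsub>G\<^esub>" using x f_car by (simp add: f_mult f_inv)
      then have "inv x \<otimes> x' \<in> M" unfolding M_def kernel_def using x by simp
      then have "c (inv x \<otimes> x') = \<one>\<^bsub>G\<^esub>" by (rule MN)
      then have "inv\<^bsub>G\<^esub> c x \<otimes>\<^bsub>G\<^esub> c x' = \<one>\<^bsub>G\<^esub>" using x by (simp add: c_mult c_inv)
      then show "c x = c x'" using x c_car by (metis G.inv_equality G.inv_inv G.inv_closed)
    qed
    define A where "A = f ` carrier K"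
    define th where "th a = c (SOME x. x \<in> carrier K \<and> f x = a)" for a
    have th: "\<And>x. x \<in> carrier K \<Longrightarrow> th (f x) = c x"
    proof -
      fix x assume x: "x \<in> carrier K"
      have "(SOME x'. x' \<in> carrier K \<and> f x' = f x) \<in> carrier K \<and> f (SOME x'. x' \<in> carrier K \<and> f x' = f x) = f x"
        by (rule someI[of _ x]) (use x in simp)
      then show "th (f x) = c x" unfolding th_def using fib x by blast
    qed
    have thA: "th ` A = carrier G"
    proof -
      have "th ` A = c ` carrier K" unfolding A_def image_image using th by (auto simp: image_def)
      then show ?thesis using cs by simp
    qed
    have AG: "A \<subseteq> carrier G" unfolding A_def using f_car by auto
    have finA: "finite A" using AG fin finite_subset by blast
    have "card A \<le> card (carrier G)" using card_mono[OF fin AG] .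
    moreover have "card (th ` A) \<le> card A" using finA by (rule card_image_le)
    ultimately have "card (th ` A) = card A" using thA by simp
    then have inj: "inj_on th A" using finA inj_on_iff_eq_card by blast
    have "th (f z) = th (f \<one>)" using th[of z] th[of \<one>] NK z0 c_one by simp
    moreover have "f z \<in> A" "f \<one> \<in> A" unfolding A_def using NK z0 by auto
    ultimately have "f z = f \<one>" using inj by (meson inj_on_def)
    then show False using z0 f_one by simp
  qed
qed

theorem main: "\<exists>h\<in>iso G G. \<forall>x\<in>carrier K. f x = h (c x)"
proof -
  have fibf: "\<And>x x'. x \<in> carrier K \<Longrightarrow> x' \<in> carrier K \<Longrightarrow> c x = c x' \<Longrightarrow> f x = f x'"
  proof -
    fix x x' assume x: "x \<in> carrier K" "x' \<in> carrier K" "c x = c x'"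
    have "c (inv x \<otimes> x') = \<one>\<^bsub>G\<^esub>" using x c_car by (simp add: c_mult c_inv)
    then have "inv x \<otimes> x' \<in> N" unfolding N_def using x by simp
    then have "f (inv x \<otimes> x') = \<one>\<^bsub>G\<^esub>" by (rule N_ker)
    then have "inv\<^bsub>G\<^esub> f x \<otimes>\<^bsub>G\<^esub> f x' = \<one>\<^bsub>G\<^esub>" using x by (simp add: f_mult f_inv)
    note e = this
    have "f x' = f x \<otimes>\<^bsub>G\<^esub> (inv\<^bsub>G\<^esub> f x \<otimes>\<^bsub>G\<^esub> f x')" using x f_car by (simp add: G.m_assoc[symmetric])
    also have "\<dots> = f x" unfolding e using x f_car by simp
    finally show "f x = f x'" by simp
  qed
  define h where "h g = f (rep g)" for g
  have hc: "\<And>x. x \<in> carrier K \<Longrightarrow> h (c x) = f x"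
  proof -
    fix x assume x: "x \<in> carrier K"
    have "rep (c x) \<in> carrier K" "c (rep (c x)) = c x" using rep c_car[OF x] by auto
    then show "h (c x) = f x" unfolding h_def using fibf x by blast
  qed
  have hhom: "h \<in> hom G G"
  proof (rule homI)
    fix g assume "g \<in> carrier G" then show "h g \<in> carrier G" unfolding h_def using rep f_car by blast
  next
    fix g g' assume g: "g \<in> carrier G" "g' \<in> carrier G"
    have r: "rep g \<in> carrier K" "c (rep g) = g" "rep g' \<in> carrier K" "c (rep g') = g'"
      using rep g by auto
    have "h (g \<otimes>\<^bsub>G\<^esub> g') = h (c (rep g \<otimes> rep g'))" using r by (simp add: c_mult)
    also have "\<dots> = f (rep g) \<otimes>\<^bsub>G\<^esub> f (rep g')" using hc r by (simp add: f_mult)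
    finally show "h (g \<otimes>\<^bsub>G\<^esub> g') = h g \<otimes>\<^bsub>G\<^esub> h g'" unfolding h_def .
  qed
  interpret hh: group_hom G G h using hhom by unfold_locales
  have "kernel G G h \<lhd> G" by (rule hh.normal_kernel)
  then have "kernel G G h = carrier G \<or> kernel G G h = {\<one>\<^bsub>G\<^esub>}" by (rule S.no_real_normal_subgroup)
  moreover have "kernel G G h \<noteq> carrier G"
  proof
    assume "kernel G G h = carrier G"
    then have "\<And>g. g \<in> carrier G \<Longrightarrow> h g = \<one>\<^bsub>G\<^esub>" unfolding kernel_def by auto
    then have "\<And>x. x \<in> carrier K \<Longrightarrow> f x = \<one>\<^bsub>G\<^esub>" using hc c_car by metis
    then show False using fnt by blast
  qed
  ultimately have "kernel G G h = {\<one>\<^bsub>G\<^esub>}" by meson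
  then have inj: "inj_on h (carrier G)" by (rule hh.trivial_ker_imp_inj)
  have "h ` carrier G \<subseteq> carrier G" using hhom by (rule hom_carrier)
  moreover have "card (h ` carrier G) = card (carrier G)" using inj by (rule card_image)
  ultimately have "h ` carrier G = carrier G" using fin card_subset_eq by blast
  then have "bij_betw h (carrier G) (carrier G)" using inj by (simp add: bij_betw_def)
  then have "h \<in> iso G G" using hhom unfolding iso_def by blast
  moreover have "\<forall>x\<in>carrier K. f x = h (c x)" using hc by simp
  ultimately show ?thesis by blast
qed

end

theorem lemma8p3:
  fixes K :: "('a, 'c) monoid_scheme" and G :: "('b, 'd) monoid_scheme"
  assumes "group K"
    and "simple_group G" and "finite (carrier G)"
    and "generalized_subgroup K G c"
    and "c ` carrier K = carrier G"
    and "f \<in> hom K G"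
    and "\<exists>x\<in>carrier K. f x \<noteq> \<one>\<^bsub>G\<^esub>"
  shows "\<exists>h\<in>iso G G. \<forall>x\<in>carrier K. f x = h (c x)"
proof -
  have gG: "group G" using assms(2) by (rule simple_group.axioms(1))
  have ch: "c \<in> hom K G" using assms(4) unfolding generalized_subgroup_def by blast
  interpret ctx2 K G c f
    by (rule ctx2.intro[OF ctx.intro[OF assms(1) gG] assms(2)], unfold ctx_axioms_def ctx2_axioms_def)
       (use assms ch in auto)
  show ?thesis by (rule main)
qed

end
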